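(* For every $A\ge0$ and $T>0$ there is $\alpha\ge0$ (depending only on $A$, $T$ and $f,r$) such that: if $y$ solves $y_t+f(y)_x=y_{xx}+r(y)$ on $[0,1]\times(0,T)$ with $y(0,t)=y(1,t)=0$ and $\|y(\cdot,0)\|_\infty\le A$, and $\eta$ solves $\eta_t+[f'(y)\eta]_x=\eta_{xx}+r'(y)\eta$ on $(0,T)$ with Dirichlet boundary conditions and $\eta(\cdot,0)=v\in H^1_0(0,1)$, then $$\|\eta^2(t)\|\le\|v^2\|e^{\alpha t}\qquad\text{for all }t<T.$$
   Context: $\|\cdot\|$ denotes the $L^2(0,1)$ norm, so $\|\eta^2\|=\|\eta\|_{L^4(0,1)}^2$. Standing assumptions: $f,r\in C^2(\mathbb R)$ and $\int_{-\infty}^0\frac{dy}{|r(y)|+1}=\int_0^\infty\frac{dy}{|r(y)|+1}=\infty$. *)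

theory Defs
  imports "HOL-Analysis.Analysis"
begin

definition C2 :: "(real \<Rightarrow> real) \<Rightarrow> bool" where
  "C2 g \<longleftrightarrow> (\<exists>g' g''. (\<forall>x. (g has_real_derivative g' x) (at x)) \<and>
      (\<forall>x. (g' has_real_derivative g'' x) (at x)) \<and> continuous_on UNIV g'')"

definition L2norm :: "(real \<Rightarrow> real) \<Rightarrow> real" where
  "L2norm g = sqrt (integral {0..1} (\<lambda>x. (g x)^2))"

definition classical_reg :: "real \<Rightarrow> (real \<Rightarrow> real \<Rightarrow> real) \<Rightarrow> bool" where
  "classical_reg T u \<longleftrightarrow>
     continuous_on ({0..1} \<times> {0..<T}) (\<lambda>(x,t). u x t) \<and>
     (\<exists>ut ux uxx.
        continuous_on ({0..1} \<times> {0<..<T}) (\<lambda>(x,t). ut x t) \<and>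
        continuous_on ({0..1} \<times> {0<..<T}) (\<lambda>(x,t). ux x t) \<and>
        continuous_on ({0..1} \<times> {0<..<T}) (\<lambda>(x,t). uxx x t) \<and>
        (\<forall>x\<in>{0..1}. \<forall>t\<in>{0<..<T}.
           ((\<lambda>s. u x s) has_real_derivative ut x t) (at t) \<and>
           ((\<lambda>\<xi>. u \<xi> t) has_real_derivative ux x t) (at x within {0..1}) \<and>
           ((\<lambda>\<xi>. ux \<xi> t) has_real_derivative uxx x t) (at x within {0..1})))"

definition solves_y :: "(real \<Rightarrow> real) \<Rightarrow> (real \<Rightarrow> real) \<Rightarrow> real \<Rightarrow> (real \<Rightarrow> real \<Rightarrow> real) \<Rightarrow> bool" where
  "solves_y f r T y \<longleftrightarrow> classical_reg T y \<and>
     (\<forall>t\<in>{0..<T}. y 0 t = 0 \<and> y 1 t = 0) \<and>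
     (\<forall>x\<in>{0<..<1}. \<forall>t\<in>{0<..<T}.
        deriv (\<lambda>s. y x s) t + deriv (\<lambda>\<xi>. f (y \<xi> t)) x
          = deriv (deriv (\<lambda>\<xi>. y \<xi> t)) x + r (y x t))"

definition solves_lin :: "(real \<Rightarrow> real) \<Rightarrow> (real \<Rightarrow> real) \<Rightarrow> real \<Rightarrow> (real \<Rightarrow> real \<Rightarrow> real)
    \<Rightarrow> (real \<Rightarrow> real \<Rightarrow> real) \<Rightarrow> bool" where
  "solves_lin f r T y \<eta> \<longleftrightarrow> classical_reg T \<eta> \<and>
     (\<forall>t\<in>{0..<T}. \<eta> 0 t = 0 \<and> \<eta> 1 t = 0) \<and>
     (\<forall>x\<in>{0<..<1}. \<forall>t\<in>{0<..<T}.
        deriv (\<lambda>s. \<eta> x s) t + deriv (\<lambda>\<xi>. deriv f (y \<xi> t) * \<eta> \<xi> t) x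
          = deriv (deriv (\<lambda>\<xi>. \<eta> \<xi> t)) x + deriv r (y x t) * \<eta> x t)"

definition H10 :: "(real \<Rightarrow> real) \<Rightarrow> bool" where
  "H10 v \<longleftrightarrow> (\<exists>g. g \<in> borel_measurable lborel \<and>
      set_integrable lborel {0..1} g \<and>
      set_integrable lborel {0..1} (\<lambda>x. (g x)^2) \<and>
      (\<forall>x\<in>{0..1}. v x = (\<integral>s\<in>{0..x}. g s \<partial>lborel))) \<and> v 0 = 0 \<and> v 1 = 0"

end

theory Submission
  imports Defs
begin


lemma within01_at:
  assumes "(g has_real_derivative d) (at x within {0..1})" "0 < x" "x < (1::real)"
  shows "(g has_real_derivative d) (at x)"
proof -
  have "at x within {0..1} = at x" using assms(2,3) by (rule at_within_Icc_at)
  with assms(1) show ?thesis by simp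
qed

lemma interior_max_deriv:
  fixes w w' w'' :: "real \<Rightarrow> real"
  assumes x0: "0 < x0" "x0 < 1"
    and d1: "\<forall>x\<in>{0..1}. (w has_real_derivative w' x) (at x within {0..1})"
    and d2: "(w' has_real_derivative w'' x0) (at x0 within {0..1})"
    and mx: "\<forall>x\<in>{0..1}. w x \<le> w x0"
  shows "w' x0 = 0 \<and> w'' x0 \<le> 0"
proof -
  have dat: "(w has_real_derivative w' x) (at x)" if "0 < x" "x < 1" for x
    using d1 that by (intro within01_at) auto
  have d2': "(w' has_real_derivative w'' x0) (at x0)"
    using d2 x0 by (intro within01_at) auto
  have w0: "w' x0 = 0"
  proof (rule DERIV_local_max[OF dat[OF x0]])
    show "0 < min x0 (1 - x0)" using x0 by simp
    show "\<forall>y. \<bar>x0 - y\<bar> < min x0 (1 - x0) \<longrightarrow> w y \<le> w x0"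
      using mx by (auto simp: abs_if split: if_splits)
  qed
  moreover have "w'' x0 \<le> 0"
  proof (rule ccontr)
    assume "\<not> w'' x0 \<le> 0"
    then obtain d where d: "d > 0" "\<forall>h>0. h < d \<longrightarrow> w' x0 < w' (x0 + h)"
      using DERIV_pos_inc_right[OF d2'] by force
    define h where "h = min d (1 - x0) / 2"
    have h: "h > 0" "h < d" "x0 + h < 1" using d x0 unfolding h_def by (auto simp: min_def field_simps)
    obtain z where z: "x0 < z" "z < x0 + h" "w (x0 + h) - w x0 = (x0 + h - x0) * w' z"
      using MVT2[of x0 "x0 + h" w w'] h x0 dat by force
    have "w' z > 0" using d(2)[rule_format, of "z - x0"] z w0 h by auto
    then have "h * w' z > 0" using h by simp
    then have "w (x0 + h) > w x0" using z by simp
    then show False using mx[rule_format, of "x0 + h"] h x0 by auto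
  qed
  ultimately show ?thesis by simp
qed

lemma strict_incr_interval:
  fixes H h :: "real \<Rightarrow> real"
  assumes Hd: "\<forall>s\<in>{a<..<b}. (H has_real_derivative h s) (at s) \<and> h s > 0"
    and "a < s" "s < s'" "s' < b"
  shows "H s < H s'"
  by (rule DERIV_pos_imp_increasing[OF assms(3)]) (use Hd assms in force)

lemma comparison:
  fixes u ut ux uxx :: "real \<Rightarrow> real \<Rightarrow> real" and H h \<rho> :: "real \<Rightarrow> real"
  assumes cont: "continuous_on ({0..1} \<times> {0..<T}) (\<lambda>(x,t). u x t)"
    and der: "\<forall>x\<in>{0..1}. \<forall>t\<in>{0<..<T}. ((\<lambda>s. u x s) has_real_derivative ut x t) (at t) \<and>
        ((\<lambda>\<xi>. u \<xi> t) has_real_derivative ux x t) (at x within {0..1}) \<and>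
        ((\<lambda>\<xi>. ux \<xi> t) has_real_derivative uxx x t) (at x within {0..1})"
    and bd: "\<forall>t\<in>{0..<T}. u 0 t = 0 \<and> u 1 t = 0"
    and init: "\<forall>x\<in>{0..1}. u x 0 \<le> A"
    and key: "\<forall>x\<in>{0<..<1}. \<forall>t\<in>{0<..<T}. ux x t = 0 \<longrightarrow> uxx x t \<le> 0 \<longrightarrow> ut x t \<le> \<rho> (u x t)"
    and t1: "0 \<le> t1" "t1 < T"
    and ab: "a < 0" "0 \<le> A" "A < b"
    and range: "\<forall>x\<in>{0..1}. \<forall>t\<in>{0..t1}. a < u x t \<and> u x t < b"
    and Hc: "continuous_on {a..b} H"
    and Hd: "\<forall>s\<in>{a<..<b}. (H has_real_derivative h s) (at s) \<and> h s > 0 \<and> h s * \<rho> s < 1"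
  shows "\<forall>x\<in>{0..1}. H (u x t1) < t1 + H A + 1"
proof (rule ccontr)
  assume "\<not> ?thesis"
  then obtain x1 where x1: "x1 \<in> {0..1}" "H (u x1 t1) \<ge> t1 + H A + 1" by force
  have Hd': "\<forall>s\<in>{a<..<b}. (H has_real_derivative h s) (at s) \<and> h s > 0" using Hd by blast
  have Hle: "H s \<le> H s'" if "a < s" "s \<le> s'" "s' < b" for s s'
    using strict_incr_interval[OF Hd', of s s'] that by (cases "s = s'") auto
  define S where "S = {0..1::real} \<times> {0..t1::real}"
  define \<phi> where "\<phi> = (\<lambda>p. H (u (fst p) (snd p)) - snd p)"
  have Ssub: "S \<subseteq> {0..1} \<times> {0..<T}" using t1 by (auto simp: S_def)
  have ucS: "continuous_on S (\<lambda>p. u (fst p) (snd p))"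
    using continuous_on_subset[OF cont Ssub] by (simp add: case_prod_beta)
  have uimg: "(\<lambda>p. u (fst p) (snd p)) ` S \<subseteq> {a..b}"
    using range by (force simp: S_def less_imp_le)
  have phic: "continuous_on S \<phi>"
    unfolding \<phi>_def
    by (intro continuous_intros continuous_on_compose2[OF Hc ucS uimg])
  define K where "K = S \<inter> \<phi> -` {H A + 1..}"
  have "closed S" by (simp add: S_def closed_Times)
  then have "closed K" unfolding K_def by (intro continuous_closed_preimage phic) auto
  moreover have "compact S" by (simp add: S_def compact_Times)
  ultimately have "compact K" using compact_Int_closed[of S K] by (simp add: K_def Int_absorb1)
  moreover have "(x1, t1) \<in> K" using x1 t1 by (auto simp: K_def S_def \<phi>_def)
  ultimately obtain p0 where p0: "p0 \<in> K" "\<forall>q\<in>K. snd p0 \<le> snd q"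
    using continuous_attains_inf[of K snd] continuous_on_snd[OF continuous_on_id] by blast
  obtain x0 t0 where xt0: "p0 = (x0, t0)" by (cases p0)
  have x0: "x0 \<in> {0..1}" and t0: "t0 \<in> {0..t1}" and phi0: "\<phi> (x0,t0) \<ge> H A + 1"
    using p0 xt0 by (auto simp: K_def S_def)
  have before: "\<phi> (x,t) < H A + 1" if "x \<in> {0..1}" "t \<in> {0..t1}" "t < t0" for x t
    using p0(2)[rule_format, of "(x,t)"] that xt0 by (force simp: K_def S_def)
  have at0: "\<phi> (x,0) < H A + 1" if "x \<in> {0..1}" for x
  proof -
    have "H (u x 0) \<le> H A" using Hle[of "u x 0" A] range init that t1 ab by auto
    then show ?thesis by (simp add: \<phi>_def)
  qed
  have t0pos: "t0 > 0"
  proof (rule ccontr)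
    assume "\<not> t0 > 0"
    then have "t0 = 0" using t0 by auto
    then show False using at0[OF x0] phi0 by simp
  qed
  have t0T: "t0 < T" using t0 t1 by auto
  have attop: "\<phi> (x,t0) \<le> H A + 1" if x: "x \<in> {0..1}" for x
  proof -
    have psic: "continuous_on {0..t1} (\<lambda>s. \<phi> (x,s))"
      by (rule continuous_on_compose2[OF phic]) (use x in \<open>auto intro!: continuous_intros simp: S_def\<close>)
    then have "((\<lambda>s. \<phi> (x,s)) \<longlongrightarrow> \<phi> (x,t0)) (at t0 within {0..t1})"
      using t0 by (simp add: continuous_on_def)
    then have "((\<lambda>s. \<phi> (x,s)) \<longlongrightarrow> \<phi> (x,t0)) (at t0 within {0..t0})"
      by (rule tendsto_within_subset) (use t0 in auto)
    then have lim: "((\<lambda>s. \<phi> (x,s)) \<longlongrightarrow> \<phi> (x,t0)) (at_left t0)"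
      using at_within_Icc_at_left[of 0 t0] t0pos by simp
    have ev: "eventually (\<lambda>s. \<phi> (x,s) \<le> H A + 1) (at_left t0)"
      using eventually_at_left_real[OF t0pos]
      by eventually_elim (use before x t0 in \<open>auto intro!: less_imp_le\<close>)
    show ?thesis
      using tendsto_upperbound[OF lim ev] by simp
  qed
  have eq0: "\<phi> (x0,t0) = H A + 1" using attop[OF x0] phi0 by simp
  have umax: "u x t0 \<le> u x0 t0" if x: "x \<in> {0..1}" for x
  proof (rule ccontr)
    assume "\<not> ?thesis"
    then have "H (u x0 t0) < H (u x t0)"
      using strict_incr_interval[OF Hd', of "u x0 t0" "u x t0"] range x x0 t0 by auto
    then show False using attop[OF x] eq0 by (simp add: \<phi>_def)
  qed
  have Hzero: "H 0 \<le> H A" using Hle[of 0 A] ab by auto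
  have x0i: "0 < x0" "x0 < 1"
  proof -
    have "x0 \<noteq> 0" "x0 \<noteq> 1"
      using eq0 bd t0 t0pos t0T Hzero by (auto simp: \<phi>_def)
    then show "0 < x0" "x0 < 1" using x0 by auto
  qed
  have "ux x0 t0 = 0 \<and> uxx x0 t0 \<le> 0"
    by (rule interior_max_deriv[OF x0i, where w = "\<lambda>\<xi>. u \<xi> t0"])
       (use der t0pos t0T x0 umax in auto)
  then have utle: "ut x0 t0 \<le> \<rho> (u x0 t0)" using key x0i t0pos t0T by auto
  define v where "v = u x0 t0"
  have v: "a < v" "v < b" using range x0 t0 by (auto simp: v_def)
  have Hv: "(H has_real_derivative h v) (at v)" "h v > 0" "h v * \<rho> v < 1" using Hd v by auto
  have chi: "((\<lambda>s. H (u x0 s) - s) has_real_derivative h v * ut x0 t0 - 1) (at t0)"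
  proof -
    have d1: "((\<lambda>s. u x0 s) has_real_derivative ut x0 t0) (at t0)"
      using der x0 t0pos t0T by auto
    have "((\<lambda>s. H (u x0 s)) has_real_derivative h v * ut x0 t0) (at t0)"
      using DERIV_chain2[of H "h v" "\<lambda>s. u x0 s", OF _ d1] Hv(1) by (simp add: v_def)
    from DERIV_diff[OF this DERIV_ident] show ?thesis .
  qed
  have "h v * ut x0 t0 - 1 \<ge> 0"
  proof (rule ccontr)
    assume neg: "\<not> ?thesis"
    obtain d where d: "d > 0" "\<forall>hh>0. hh < d \<longrightarrow> H (u x0 t0) - t0 < H (u x0 (t0 - hh)) - (t0 - hh)"
      using DERIV_neg_dec_left[OF chi] neg by force
    define hh where "hh = min d t0 / 2"
    have hh: "hh > 0" "hh < d" "hh < t0" using d t0pos by (auto simp: hh_def min_def)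
    have "\<phi> (x0, t0 - hh) < H A + 1" using before[OF x0, of "t0 - hh"] hh t0 by auto
    then show False using d(2)[rule_format, OF hh(1,2)] eq0 by (simp add: \<phi>_def)
  qed
  then have "h v * ut x0 t0 \<ge> 1" by simp
  moreover have "h v * ut x0 t0 \<le> h v * \<rho> v" using utle Hv(2) by (simp add: v_def)
  ultimately show False using Hv(3) by simp
qed

lemma nn_inf_unbounded:
  fixes r :: "real \<Rightarrow> real" and I :: "nat \<Rightarrow> real set"
  assumes rc: "continuous_on UNIV r"
    and inf: "(\<integral>\<^sup>+ s. ennreal (indicator S s / (\<bar>r s\<bar> + 1)) \<partial>lborel) = \<infinity>"
    and Iint: "\<And>n. \<exists>a b. I n = {a..b}"
    and Imono: "\<And>n. I n \<subseteq> I (Suc n)"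
    and Icov: "\<And>x. x \<in> S \<Longrightarrow> \<exists>n. x \<in> I n"
    and Isub: "\<And>n. I n \<subseteq> S"
  shows "\<exists>n. integral (I n) (\<lambda>s. 1 / (\<bar>r s\<bar> + 1)) > B"
proof (rule ccontr)
  assume "\<not> ?thesis"
  then have bnd: "\<And>n. integral (I n) (\<lambda>s. 1 / (\<bar>r s\<bar> + 1)) \<le> B" by (meson not_le)
  define g where "g = (\<lambda>s. 1 / (\<bar>r s\<bar> + 1))"
  have gc: "continuous_on UNIV g" unfolding g_def
    by (intro continuous_intros rc) (auto simp: add_nonneg_eq_0_iff)
  have gpos: "g s \<ge> 0" for s by (simp add: g_def)
  define F where "F = (\<lambda>n x. ennreal (indicator (I n) x / (\<bar>r x\<bar> + 1)))"
  have gmeas: "g \<in> borel_measurable borel"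
    using gc by (intro borel_measurable_continuous_onI) simp
  have Imeas: "I n \<in> sets borel" for n using Iint[of n] by auto
  have Smeas: "\<And>n. (\<lambda>x. indicator (I n) x * g x) \<in> borel_measurable borel"
    using gmeas Imeas by measurable
  have Fn: "integral\<^sup>N lborel (F n) = ennreal (integral (I n) g)" for n
  proof -
    obtain a b where ab: "I n = {a..b}" using Iint by blast
    have hi: "(g has_integral integral (I n) g) (I n)"
      unfolding ab by (intro integrable_integral integrable_continuous_interval continuous_on_subset[OF gc]) auto
    have "integral\<^sup>N lborel (\<lambda>x. indicator (I n) x * g x) = integral (I n) g"
      by (rule nn_integral_has_integral_lebesgue[OF _ hi]) (simp add: gpos)
    moreover have "F n = (\<lambda>x. ennreal (indicator (I n) x * g x))"
      by (auto simp: F_def g_def fun_eq_iff indicator_def)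
    ultimately show ?thesis by simp
  qed
  have "(\<lambda>n. integral\<^sup>N lborel (F n)) \<longlonglongrightarrow> (\<integral>\<^sup>+ s. ennreal (indicator S s / (\<bar>r s\<bar> + 1)) \<partial>lborel)"
  proof (rule nn_integral_LIMSEQ)
    show "incseq F"
      unfolding incseq_Suc_iff le_fun_def F_def
      using Imono by (auto simp: indicator_def intro!: ennreal_leI)
    show "F n \<in> borel_measurable lborel" for n
    proof -
      have "F n = (\<lambda>x. ennreal (indicator (I n) x * g x))"
        by (auto simp: F_def g_def fun_eq_iff indicator_def)
      then show ?thesis using Smeas[of n] by simp
    qed
    show "(\<lambda>n. F n x) \<longlonglongrightarrow> ennreal (indicator S x / (\<bar>r x\<bar> + 1))" for x
    proof (cases "x \<in> S")
      case True
      then obtain n0 where n0: "x \<in> I n0" using Icov by blast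
      have "x \<in> I n" if "n \<ge> n0" for n
        using that n0 Imono lift_Suc_mono_le[of I n0 n] by (auto simp: le_fun_def)
      then have "eventually (\<lambda>n. F n x = ennreal (indicator S x / (\<bar>r x\<bar> + 1))) sequentially"
        using True by (auto simp: F_def eventually_sequentially intro!: exI[of _ n0])
      then show ?thesis by (rule tendsto_eventually)
    next
      case False
      then have "F n x = ennreal (indicator S x / (\<bar>r x\<bar> + 1))" for n
        using Isub by (auto simp: F_def indicator_def)
      then show ?thesis by simp
    qed
  qed
  then have "(\<lambda>n. integral\<^sup>N lborel (F n)) \<longlonglongrightarrow> \<infinity>" using inf by simp
  moreover have "\<forall>n\<ge>0. integral\<^sup>N lborel (F n) \<le> ennreal B"
    using bnd by (auto simp: Fn g_def intro!: ennreal_leI)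
  ultimately have "\<infinity> \<le> ennreal B" by (intro LIMSEQ_le_const2) auto
  then show False by (simp add: top_unique)
qed

lemma N_exists:
  fixes g :: "real \<Rightarrow> real"
  assumes gc: "continuous_on UNIV g" and gpos: "\<And>s. g s \<ge> 0"
    and unb: "\<And>B. \<exists>n::nat. integral {0..real n} g > B" and A: "A \<ge> 0"
  shows "\<exists>N\<ge>A. integral {A..N} g \<ge> B"
proof -
  obtain n :: nat where n: "integral {0..real n} g > B + integral {0..A} g" using unb by blast
  define N where "N = max (real n) A"
  have intg: "g integrable_on {a..b}" for a b
    by (intro integrable_continuous_interval continuous_on_subset[OF gc]) auto
  have "integral {0..real n} g \<le> integral {0..N} g"
    by (rule integral_subset_le) (auto simp: N_def intg gpos)
  moreover have "integral {0..A} g + integral {A..N} g = integral {0..N} g"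
    by (rule Henstock_Kurzweil_Integration.integral_combine[OF A _ intg]) (simp add: N_def)
  ultimately have "integral {A..N} g \<ge> B" using n by linarith
  then show ?thesis by (auto simp: N_def intro!: exI[of _ N])
qed

lemma reflect_int:
  fixes g :: "real \<Rightarrow> real"
  assumes gc: "continuous_on UNIV g"
  shows "integral {0..real n} (\<lambda>s. g (- s)) = integral {- real n..0} g"
proof -
  have "(g has_integral integral {- real n..0} g) {- real n..0}"
    by (intro integrable_integral integrable_continuous_interval continuous_on_subset[OF gc]) auto
  then have "((\<lambda>s. g (- s)) has_integral integral {- real n..0} g) {-0..-(-real n)}"
    by (subst has_integral_reflect_real) 
  then show ?thesis by (simp add: integral_unique)
qed

lemma comparison_bound:
  fixes u ut ux uxx :: "real \<Rightarrow> real \<Rightarrow> real" and \<rho> :: "real \<Rightarrow> real"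
  assumes cont: "continuous_on ({0..1} \<times> {0..<T}) (\<lambda>(x,t). u x t)"
    and der: "\<forall>x\<in>{0..1}. \<forall>t\<in>{0<..<T}. ((\<lambda>s. u x s) has_real_derivative ut x t) (at t) \<and>
        ((\<lambda>\<xi>. u \<xi> t) has_real_derivative ux x t) (at x within {0..1}) \<and>
        ((\<lambda>\<xi>. ux \<xi> t) has_real_derivative uxx x t) (at x within {0..1})"
    and bd: "\<forall>t\<in>{0..<T}. u 0 t = 0 \<and> u 1 t = 0"
    and init: "\<forall>x\<in>{0..1}. u x 0 \<le> A"
    and key: "\<forall>x\<in>{0<..<1}. \<forall>t\<in>{0<..<T}. ux x t = 0 \<longrightarrow> uxx x t \<le> 0 \<longrightarrow> ut x t \<le> \<rho> (u x t)"
    and A: "0 \<le> A"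
    and \<rho>c: "continuous_on UNIV \<rho>"
    and N: "N \<ge> A" "integral {A..N} (\<lambda>s. 1 / (\<bar>\<rho> s\<bar> + 1)) \<ge> T + 1"
  shows "\<forall>x\<in>{0..1}. \<forall>t\<in>{0..<T}. u x t < N"
proof (intro ballI)
  fix x t assume x: "x \<in> {0..1::real}" and t: "t \<in> {0..<T}"
  define S where "S = {0..1::real} \<times> {0..t}"
  have Ssub: "S \<subseteq> {0..1} \<times> {0..<T}" using t by (auto simp: S_def)
  have ucS: "continuous_on S (\<lambda>p. u (fst p) (snd p))"
    using continuous_on_subset[OF cont Ssub] by (simp add: case_prod_beta)
  have "compact S" by (simp add: S_def compact_Times)
  then have "bounded ((\<lambda>p. u (fst p) (snd p)) ` S)"
    by (intro compact_imp_bounded compact_continuous_image ucS)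
  then obtain L where L: "\<forall>p\<in>S. \<bar>u (fst p) (snd p)\<bar> \<le> L"
    unfolding bounded_iff by auto
  define a where "a = - \<bar>L\<bar> - 1"
  define b where "b = \<bar>L\<bar> + A + N + 1"
  define g where "g = (\<lambda>s. 1 / (\<bar>\<rho> s\<bar> + 1))"
  define H where "H = (\<lambda>s. integral {a..s} g)"
  have gc: "continuous_on UNIV g" unfolding g_def
    by (intro continuous_intros \<rho>c) (auto simp: add_nonneg_eq_0_iff)
  have gpos: "g s > 0" for s by (simp add: g_def add_pos_nonneg)
  have intg: "g integrable_on {c..d}" for c d
    by (intro integrable_continuous_interval continuous_on_subset[OF gc]) auto
  have Hc: "continuous_on {a..b} H" unfolding H_def by (rule indefinite_integral_continuous_1[OF intg])
  have Hd: "\<forall>s\<in>{a<..<b}. (H has_real_derivative g s) (at s) \<and> g s > 0 \<and> g s * \<rho> s < 1"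
  proof
    fix s assume s: "s \<in> {a<..<b}"
    have "(H has_real_derivative g s) (at s within {a..b})"
      unfolding H_def by (rule integral_has_real_derivative[OF continuous_on_subset[OF gc]]) (use s in auto)
    moreover have "at s within {a..b} = at s" using s by (intro at_within_Icc_at) auto
    moreover have "g s * \<rho> s < 1"
      by (simp add: g_def divide_simps) (smt (verit))
    ultimately show "(H has_real_derivative g s) (at s) \<and> g s > 0 \<and> g s * \<rho> s < 1"
      using gpos by simp
  qed
  have range: "\<forall>x\<in>{0..1}. \<forall>t'\<in>{0..t}. a < u x t' \<and> u x t' < b"
    using L N A by (force simp: S_def a_def b_def)
  have "\<forall>x\<in>{0..1}. H (u x t) < t + H A + 1"
    by (rule comparison[OF cont der bd init key _ _ _ A _ range Hc Hd]) (use t N A in \<open>auto simp: a_def b_def\<close>)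
  then have lt: "H (u x t) < t + H A + 1" using x by blast
  show "u x t < N"
  proof (rule ccontr)
    assume "\<not> u x t < N"
    then have uN: "u x t \<ge> N" by simp
    have aA: "a \<le> A" using A by (simp add: a_def)
    have "H A + integral {A..u x t} g = H (u x t)"
      unfolding H_def by (rule Henstock_Kurzweil_Integration.integral_combine[OF aA _ intg]) (use uN N in auto)
    moreover have "integral {A..N} g \<le> integral {A..u x t} g"
      by (rule integral_subset_le) (use uN gpos in \<open>auto simp: intg less_imp_le\<close>)
    ultimately show False using lt N(2) t by (simp add: g_def)
  qed
qed

lemma interior_deriv2:
  fixes w w' w'' :: "real \<Rightarrow> real"
  assumes d1: "\<forall>\<xi>\<in>{0..1}. (w has_real_derivative w' \<xi>) (at \<xi> within {0..1})"
    and d2: "(w' has_real_derivative w'' x) (at x within {0..1})"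
    and x: "0 < x" "x < 1"
  shows "deriv w x = w' x" "deriv (deriv w) x = w'' x"
proof -
  have dd: "deriv w \<xi> = w' \<xi>" if "\<xi> \<in> {0<..<1}" for \<xi>
    using d1 that by (intro DERIV_imp_deriv within01_at) auto
  then show "deriv w x = w' x" using x by simp
  have "eventually (\<lambda>\<xi>. \<xi> \<in> {0<..<1}) (nhds x)"
    using x by (intro eventually_nhds_in_open) auto
  then have "eventually (\<lambda>\<xi>. deriv w \<xi> = w' \<xi>) (nhds x)"
    by eventually_elim (use dd in auto)
  then have "deriv (deriv w) x = deriv w' x" by (rule deriv_cong_ev) simp
  also have "\<dots> = w'' x" using d2 x by (intro DERIV_imp_deriv within01_at) auto
  finally show "deriv (deriv w) x = w'' x" .
qed

lemma C2_facts:
  assumes "C2 f"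
  obtains f' f'' where "\<And>x. (f has_real_derivative f' x) (at x)"
    "\<And>x. (f' has_real_derivative f'' x) (at x)" "continuous_on UNIV f''"
    "continuous_on UNIV f'" "continuous_on UNIV f" "deriv f = f'"
proof -
  obtain f' f'' where h: "\<forall>x. (f has_real_derivative f' x) (at x)"
    "\<forall>x. (f' has_real_derivative f'' x) (at x)" "continuous_on UNIV f''"
    using assms unfolding C2_def by blast
  have "continuous_on UNIV f'" "continuous_on UNIV f"
    using h by (auto intro!: continuous_at_imp_continuous_on DERIV_isCont)
  moreover have "deriv f = f'" using h by (auto simp: fun_eq_iff intro!: DERIV_imp_deriv)
  ultimately show ?thesis using that h by blast
qed

lemma eqn_y:
  assumes f': "\<And>x. (f has_real_derivative f' x) (at x)" "deriv f = f'"
    and der: "\<forall>x\<in>{0..1}. \<forall>t\<in>{0<..<T}. ((\<lambda>s. y x s) has_real_derivative ut x t) (at t) \<and>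
        ((\<lambda>\<xi>. y \<xi> t) has_real_derivative ux x t) (at x within {0..1}) \<and>
        ((\<lambda>\<xi>. ux \<xi> t) has_real_derivative uxx x t) (at x within {0..1})"
    and eq: "\<forall>x\<in>{0<..<1}. \<forall>t\<in>{0<..<T}.
        deriv (\<lambda>s. y x s) t + deriv (\<lambda>\<xi>. f (y \<xi> t)) x
          = deriv (deriv (\<lambda>\<xi>. y \<xi> t)) x + r (y x t)"
  shows "\<forall>x\<in>{0<..<1}. \<forall>t\<in>{0<..<T}. ut x t + f' (y x t) * ux x t = uxx x t + r (y x t)"
proof (intro ballI)
  fix x t assume x: "x \<in> {0<..<1::real}" and t: "t \<in> {0<..<T}"
  have d1: "deriv (\<lambda>s. y x s) t = ut x t" using der x t by (intro DERIV_imp_deriv) auto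
  have dx: "((\<lambda>\<xi>. y \<xi> t) has_real_derivative ux x t) (at x)"
    using der x t by (intro within01_at) auto
  have d2: "deriv (\<lambda>\<xi>. f (y \<xi> t)) x = f' (y x t) * ux x t"
    by (intro DERIV_imp_deriv DERIV_chain2[OF f'(1) dx])
  have d3: "deriv (deriv (\<lambda>\<xi>. y \<xi> t)) x = uxx x t"
    by (rule interior_deriv2(2)[where w'="\<lambda>\<xi>. ux \<xi> t"]) (use der x t in auto)
  show "ut x t + f' (y x t) * ux x t = uxx x t + r (y x t)"
  proof -
    from eq x t have "deriv (\<lambda>s. y x s) t + deriv (\<lambda>\<xi>. f (y \<xi> t)) x = deriv (deriv (\<lambda>\<xi>. y \<xi> t)) x + r (y x t)"
      by blast
    then show ?thesis using d1 d2 d3 by simp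
  qed
qed

lemma y_bound:
  assumes "C2 f" "C2 r"
    and inf1: "(\<integral>\<^sup>+ s. ennreal (indicator {..0} s / (\<bar>r s\<bar> + 1)) \<partial>lborel) = \<infinity>"
    and inf2: "(\<integral>\<^sup>+ s. ennreal (indicator {0..} s / (\<bar>r s\<bar> + 1)) \<partial>lborel) = \<infinity>"
    and A: "A \<ge> 0"
  shows "\<exists>M. \<forall>y. solves_y f r T y \<longrightarrow> (\<forall>x\<in>{0..1}. \<bar>y x 0\<bar> \<le> A) \<longrightarrow>
           (\<forall>x\<in>{0..1}. \<forall>t\<in>{0..<T}. \<bar>y x t\<bar> \<le> M)"
proof -
  obtain f' f'' where f': "\<And>x. (f has_real_derivative f' x) (at x)" "deriv f = f'"
    using C2_facts[OF assms(1)] by metis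
  obtain rc: "continuous_on UNIV r" using C2_facts[OF assms(2)] by metis
  define g where "g = (\<lambda>s. 1 / (\<bar>r s\<bar> + 1))"
  have gc: "continuous_on UNIV g" unfolding g_def
    by (intro continuous_intros rc) (auto simp: add_nonneg_eq_0_iff)
  have gpos: "g s \<ge> 0" for s by (simp add: g_def)
  have unb1: "\<exists>n::nat. integral {0..real n} g > B" for B
    using nn_inf_unbounded[OF rc inf2, of "\<lambda>n. {0..real n}" B]
    by (auto simp: g_def intro: real_nat_ceiling_ge)
  obtain N1 where N1: "N1 \<ge> A" "integral {A..N1} (\<lambda>s. 1 / (\<bar>r s\<bar> + 1)) \<ge> T + 1"
    using N_exists[OF gc gpos unb1 A] unfolding g_def by blast
  define \<rho> where "\<rho> = (\<lambda>s. - r (- s))"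
  have \<rho>c: "continuous_on UNIV \<rho>" unfolding \<rho>_def
    by (intro continuous_intros continuous_on_compose2[OF rc]) auto
  have g2: "(\<lambda>s. 1 / (\<bar>\<rho> s\<bar> + 1)) = (\<lambda>s. g (- s))" by (simp add: \<rho>_def g_def)
  have unb2: "\<exists>n::nat. integral {0..real n} (\<lambda>s. g (- s)) > B" for B
  proof -
    have "\<exists>n::nat. - real n \<le> x" if "x \<le> 0" for x :: real
      using real_nat_ceiling_ge[of "- x"] by (intro exI[of _ "nat \<lceil>- x\<rceil>"]) linarith
    then show ?thesis
      using nn_inf_unbounded[OF rc inf1, of "\<lambda>n. {- real n..0}" B]
      by (auto simp: g_def[symmetric] reflect_int[OF gc])
  qed
  have g2c: "continuous_on UNIV (\<lambda>s. g (- s))"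
    by (intro continuous_on_compose2[OF gc] continuous_intros) auto
  obtain N2 where N2: "N2 \<ge> A" "integral {A..N2} (\<lambda>s. 1 / (\<bar>\<rho> s\<bar> + 1)) \<ge> T + 1"
    using N_exists[OF g2c gpos unb2 A] unfolding g2 by blast
  show ?thesis
  proof (intro exI allI impI)
    fix y assume sy: "solves_y f r T y" and iy: "\<forall>x\<in>{0..1}. \<bar>y x 0\<bar> \<le> A"
    obtain ut ux uxx where cont: "continuous_on ({0..1} \<times> {0..<T}) (\<lambda>(x,t). y x t)"
      and der: "\<forall>x\<in>{0..1}. \<forall>t\<in>{0<..<T}. ((\<lambda>s. y x s) has_real_derivative ut x t) (at t) \<and>
        ((\<lambda>\<xi>. y \<xi> t) has_real_derivative ux x t) (at x within {0..1}) \<and>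
        ((\<lambda>\<xi>. ux \<xi> t) has_real_derivative uxx x t) (at x within {0..1})"
      and bd: "\<forall>t\<in>{0..<T}. y 0 t = 0 \<and> y 1 t = 0"
      and eq: "\<forall>x\<in>{0<..<1}. \<forall>t\<in>{0<..<T}.
        deriv (\<lambda>s. y x s) t + deriv (\<lambda>\<xi>. f (y \<xi> t)) x
          = deriv (deriv (\<lambda>\<xi>. y \<xi> t)) x + r (y x t)"
      using sy unfolding solves_y_def classical_reg_def by blast
    have E: "\<forall>x\<in>{0<..<1}. \<forall>t\<in>{0<..<T}. ut x t + f' (y x t) * ux x t = uxx x t + r (y x t)"
      by (rule eqn_y[OF f' der eq])
    have up: "\<forall>x\<in>{0..1}. \<forall>t\<in>{0..<T}. y x t < N1"
      apply (rule comparison_bound[OF cont der bd _ _ A rc N1])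
      subgoal using iy by auto
      subgoal proof (intro ballI impI)
        fix x t assume "x \<in> {0<..<1::real}" "t \<in> {0<..<T}" "ux x t = 0" "uxx x t \<le> 0"
        moreover have "ut x t + f' (y x t) * ux x t = uxx x t + r (y x t)" using E calculation by blast
        ultimately show "ut x t \<le> r (y x t)" by simp
      qed
      done
    have cont': "continuous_on ({0..1} \<times> {0..<T}) (\<lambda>(x,t). - y x t)"
      using continuous_on_minus[OF cont] by (simp add: case_prod_beta)
    have der': "\<forall>x\<in>{0..1}. \<forall>t\<in>{0<..<T}. ((\<lambda>s. - y x s) has_real_derivative - ut x t) (at t) \<and>
        ((\<lambda>\<xi>. - y \<xi> t) has_real_derivative - ux x t) (at x within {0..1}) \<and>
        ((\<lambda>\<xi>. - ux \<xi> t) has_real_derivative - uxx x t) (at x within {0..1})"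
      using der by (auto intro!: DERIV_minus)
    have lo: "\<forall>x\<in>{0..1}. \<forall>t\<in>{0..<T}. - y x t < N2"
      apply (rule comparison_bound[OF cont' der', where \<rho>=\<rho>, OF _ _ _ A \<rho>c N2])
      subgoal using bd by auto
      subgoal using iy by (auto simp: abs_le_iff)
      subgoal proof (intro ballI impI)
        fix x t assume "x \<in> {0<..<1::real}" "t \<in> {0<..<T}" "- ux x t = 0" "- uxx x t \<le> 0"
        moreover have "ut x t + f' (y x t) * ux x t = uxx x t + r (y x t)" using E calculation by blast
        ultimately show "- ut x t \<le> \<rho> (- y x t)" by (simp add: \<rho>_def)
      qed
      done
    show "\<forall>x\<in>{0..1}. \<forall>t\<in>{0..<T}. \<bar>y x t\<bar> \<le> max N1 N2"
      using up lo by fastforce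
  qed
qed

lemma gronwall_simple:
  fixes E D :: "real \<Rightarrow> real"
  assumes Ec: "continuous_on {0..<T} E"
    and Ed: "\<And>t. t \<in> {0<..<T} \<Longrightarrow> (E has_real_derivative D t) (at t)"
    and DE: "\<And>t. t \<in> {0<..<T} \<Longrightarrow> D t \<le> c * E t"
    and t: "t \<in> {0..<T}"
  shows "E t \<le> E 0 * exp (c * t)"
proof -
  define \<phi> where "\<phi> = (\<lambda>s. E s * exp (- c * s))"
  have "\<phi> t \<le> \<phi> 0"
  proof (rule DERIV_nonpos_imp_decreasing_open[of 0 t \<phi>])
    show "0 \<le> t" using t by simp
    show "continuous_on {0..t} \<phi>" unfolding \<phi>_def
      by (intro continuous_intros continuous_on_subset[OF Ec]) (use t in auto)
    fix x assume x: "0 < x" "x < t"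
    have "(\<phi> has_real_derivative D x * exp (- c * x) + E x * (exp (- c * x) * (- c))) (at x)"
      unfolding \<phi>_def
      using x t by (auto intro!: derivative_eq_intros Ed)
    moreover have "D x * exp (- c * x) + E x * (exp (- c * x) * (- c)) \<le> 0"
    proof -
      have "D x - c * E x \<le> 0" using DE[of x] x t by auto
      then have "(D x - c * E x) * exp (- c * x) \<le> 0" by (simp add: mult_nonpos_nonneg)
      then show ?thesis by (simp add: algebra_simps)
    qed
    ultimately show "\<exists>y. (\<phi> has_real_derivative y) (at x) \<and> y \<le> 0" by blast
  qed
  then show ?thesis by (simp add: \<phi>_def exp_minus field_simps)
qed





lemma pointwise_ineq:
  fixes e d p q F R :: real
  assumes "\<bar>p\<bar> \<le> F" "q \<le> R"
  shows "- 12 * e^2 * d^2 + 12 * e^3 * d * p + 4 * q * e^4 \<le> (3 * F^2 + 4 * R) * (e^2)^2"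
proof -
  have sq: "0 \<le> 3 * e^2 * (2 * d - p * e)^2" by simp
  have p2: "p^2 \<le> F^2" using assms(1) abs_le_square_iff[of p F] by simp
  have e4: "0 \<le> e^4" by simp
  have a1: "3 * p^2 * e^4 \<le> 3 * F^2 * e^4" using mult_right_mono[OF p2 e4] by simp
  have a2: "4 * q * e^4 \<le> 4 * R * e^4" using mult_right_mono[OF assms(2) e4] by simp
  have a3: "3 * e^2 * (2 * d - p * e)^2 = 12 * e^2 * d^2 - 12 * e^3 * d * p + 3 * p^2 * e^4"
    by algebra
  have a4: "(3 * F^2 + 4 * R) * (e^2)^2 = 3 * F^2 * e^4 + 4 * R * e^4" by algebra
  show ?thesis using sq a1 a2 a3 a4 by linarith
qed

lemma energy_step:
  fixes e e' e'' Y Y' et f' f'' r' :: "real \<Rightarrow> real"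
  assumes ec: "continuous_on {0..1} e" and e'c: "continuous_on {0..1} e'"
    and e''c: "continuous_on {0..1} e''" and Yc: "continuous_on {0..1} Y" and Y'c: "continuous_on {0..1} Y'"
    and ed: "\<forall>\<xi>\<in>{0..1}. (e has_real_derivative e' \<xi>) (at \<xi> within {0..1})"
    and e'd: "\<forall>\<xi>\<in>{0..1}. (e' has_real_derivative e'' \<xi>) (at \<xi> within {0..1})"
    and Yd: "\<forall>\<xi>\<in>{0..1}. (Y has_real_derivative Y' \<xi>) (at \<xi> within {0..1})"
    and e01: "e 0 = 0" "e 1 = 0"
    and f'd: "\<forall>s. (f' has_real_derivative f'' s) (at s)"
    and f''c: "continuous_on UNIV f''" and r'c: "continuous_on UNIV r'"
    and pde: "\<forall>\<xi>\<in>{0<..<1}. et \<xi> + (f'' (Y \<xi>) * Y' \<xi> * e \<xi> + f' (Y \<xi>) * e' \<xi>) = e'' \<xi> + r' (Y \<xi>) * e \<xi>"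
    and YM: "\<forall>\<xi>\<in>{0..1}. \<bar>Y \<xi>\<bar> \<le> M"
    and F: "\<forall>s. \<bar>s\<bar> \<le> M \<longrightarrow> \<bar>f' s\<bar> \<le> F" and R: "\<forall>s. \<bar>s\<bar> \<le> M \<longrightarrow> r' s \<le> R"
  shows "integral {0..1} (\<lambda>\<xi>. 4 * (e \<xi>)^3 * et \<xi>) \<le> (3 * F^2 + 4 * R) * integral {0..1} (\<lambda>\<xi>. ((e \<xi>)^2)^2)"
proof -
  have f'c: "continuous_on UNIV f'" using f'd by (auto intro!: continuous_at_imp_continuous_on DERIV_isCont)
  have f'Yc: "continuous_on {0..1} (\<lambda>\<xi>. f' (Y \<xi>))" by (rule continuous_on_compose2[OF f'c Yc]) auto
  have f''Yc: "continuous_on {0..1} (\<lambda>\<xi>. f'' (Y \<xi>))" by (rule continuous_on_compose2[OF f''c Yc]) auto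
  have r'Yc: "continuous_on {0..1} (\<lambda>\<xi>. r' (Y \<xi>))" by (rule continuous_on_compose2[OF r'c Yc]) auto
  define Q where "Q = (\<lambda>\<xi>. f' (Y \<xi>) * e \<xi>)"
  define Q' where "Q' = (\<lambda>\<xi>. f'' (Y \<xi>) * Y' \<xi> * e \<xi> + f' (Y \<xi>) * e' \<xi>)"
  have Qd: "(Q has_real_derivative Q' \<xi>) (at \<xi> within {0..1})" if "\<xi> \<in> {0..1}" for \<xi>
  proof -
    have "((\<lambda>\<xi>. f' (Y \<xi>)) has_real_derivative f'' (Y \<xi>) * Y' \<xi>) (at \<xi> within {0..1})"
      using DERIV_chain2[OF f'd[rule_format] Yd[rule_format, OF that]] .
    from DERIV_mult[OF this ed[rule_format, OF that]] show ?thesis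
      by (simp add: Q_def Q'_def algebra_simps)
  qed
  have h1: "((\<lambda>\<xi>. 3 * (e \<xi>)^2 * e' \<xi> * e' \<xi> + (e \<xi>)^3 * e'' \<xi>) has_integral 0) {0..1}"
  proof -
    have "((\<lambda>\<xi>. 3 * (e \<xi>)^2 * e' \<xi> * e' \<xi> + (e \<xi>)^3 * e'' \<xi>) has_integral
        ((e 1)^3 * e' 1 - (e 0)^3 * e' 0)) {0..1}"
    proof (rule fundamental_theorem_of_calculus[of 0 1 "\<lambda>\<xi>. (e \<xi>)^3 * e' \<xi>", simplified has_real_derivative_iff_has_vector_derivative[symmetric]])
      fix \<xi> :: real assume x: "\<xi> \<in> {0..1}"
      have "((\<lambda>\<xi>. (e \<xi>)^3) has_real_derivative 3 * (e \<xi>)^2 * e' \<xi>) (at \<xi> within {0..1})"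
        using DERIV_power[OF ed[rule_format, OF x], of 3] by (simp add: algebra_simps)
      from DERIV_mult[OF this e'd[rule_format, OF x]]
      show "((\<lambda>\<xi>. (e \<xi>)^3 * e' \<xi>) has_real_derivative 3 * (e \<xi>)^2 * e' \<xi> * e' \<xi> + (e \<xi>)^3 * e'' \<xi>) (at \<xi> within {0..1})"
        by (simp add: algebra_simps)
    qed simp
    then show ?thesis using e01 by simp
  qed
  have h2: "((\<lambda>\<xi>. 3 * (e \<xi>)^2 * e' \<xi> * Q \<xi> + (e \<xi>)^3 * Q' \<xi>) has_integral 0) {0..1}"
  proof -
    have "((\<lambda>\<xi>. 3 * (e \<xi>)^2 * e' \<xi> * Q \<xi> + (e \<xi>)^3 * Q' \<xi>) has_integral
        ((e 1)^3 * Q 1 - (e 0)^3 * Q 0)) {0..1}"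
    proof (rule fundamental_theorem_of_calculus[of 0 1 "\<lambda>\<xi>. (e \<xi>)^3 * Q \<xi>", simplified has_real_derivative_iff_has_vector_derivative[symmetric]])
      fix \<xi> :: real assume x: "\<xi> \<in> {0..1}"
      have "((\<lambda>\<xi>. (e \<xi>)^3) has_real_derivative 3 * (e \<xi>)^2 * e' \<xi>) (at \<xi> within {0..1})"
        using DERIV_power[OF ed[rule_format, OF x], of 3] by (simp add: algebra_simps)
      from DERIV_mult[OF this Qd[OF x]]
      show "((\<lambda>\<xi>. (e \<xi>)^3 * Q \<xi>) has_real_derivative 3 * (e \<xi>)^2 * e' \<xi> * Q \<xi> + (e \<xi>)^3 * Q' \<xi>) (at \<xi> within {0..1})"
        by (simp add: algebra_simps)
    qed simp
    then show ?thesis using e01 by simp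
  qed
  define G1 where "G1 = (\<lambda>\<xi>. 4 * (e \<xi>)^3 * (e'' \<xi> - Q' \<xi> + r' (Y \<xi>) * e \<xi>))"
  have G1c: "continuous_on {0..1} G1" unfolding G1_def Q'_def
    by (intro continuous_intros ec e'c e''c Y'c f'Yc f''Yc r'Yc)
  have G1i: "(G1 has_integral integral {0..1} G1) {0..1}"
    using G1c by (intro integrable_integral integrable_continuous_interval)
  have "((\<lambda>\<xi>. 4 * (e \<xi>)^3 * et \<xi>) has_integral integral {0..1} G1) {0..1}"
  proof (rule has_integral_spike_finite[OF _ _ G1i, of "{0,1}"])
    fix \<xi> :: real assume "\<xi> \<in> {0..1} - {0,1}"
    then have "\<xi> \<in> {0<..<1}" by (auto simp: less_le)
    then have "et \<xi> + (f'' (Y \<xi>) * Y' \<xi> * e \<xi> + f' (Y \<xi>) * e' \<xi>) = e'' \<xi> + r' (Y \<xi>) * e \<xi>"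
      using pde by blast
    then have "et \<xi> = e'' \<xi> - Q' \<xi> + r' (Y \<xi>) * e \<xi>" by (simp add: Q'_def algebra_simps)
    then show "4 * (e \<xi>)^3 * et \<xi> = G1 \<xi>" by (simp add: G1_def)
  qed simp
  then have D: "integral {0..1} (\<lambda>\<xi>. 4 * (e \<xi>)^3 * et \<xi>) = integral {0..1} G1"
    by (rule integral_unique)
  have "((\<lambda>\<xi>. G1 \<xi> - 4 * (3 * (e \<xi>)^2 * e' \<xi> * e' \<xi> + (e \<xi>)^3 * e'' \<xi>)
        + 4 * (3 * (e \<xi>)^2 * e' \<xi> * Q \<xi> + (e \<xi>)^3 * Q' \<xi>)) has_integral
        (integral {0..1} G1 - 4 * 0 + 4 * 0)) {0..1}"
    by (intro has_integral_add has_integral_diff has_integral_mult_right G1i h1 h2)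
  moreover have "((\<lambda>\<xi>. (3 * F^2 + 4 * R) * ((e \<xi>)^2)^2) has_integral
       (3 * F^2 + 4 * R) * integral {0..1} (\<lambda>\<xi>. ((e \<xi>)^2)^2)) {0..1}"
    by (intro has_integral_mult_right integrable_integral integrable_continuous_interval continuous_intros ec)
  ultimately have "integral {0..1} G1 - 4 * 0 + 4 * 0 \<le> (3 * F^2 + 4 * R) * integral {0..1} (\<lambda>\<xi>. ((e \<xi>)^2)^2)"
  proof (rule has_integral_le)
    fix \<xi> :: real assume x: "\<xi> \<in> {0..1}"
    have "G1 \<xi> - 4 * (3 * (e \<xi>)^2 * e' \<xi> * e' \<xi> + (e \<xi>)^3 * e'' \<xi>)
        + 4 * (3 * (e \<xi>)^2 * e' \<xi> * Q \<xi> + (e \<xi>)^3 * Q' \<xi>)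
      = - 12 * (e \<xi>)^2 * (e' \<xi>)^2 + 12 * (e \<xi>)^3 * e' \<xi> * f' (Y \<xi>) + 4 * r' (Y \<xi>) * (e \<xi>)^4"
      unfolding G1_def Q_def Q'_def by algebra
    also have "\<dots> \<le> (3 * F^2 + 4 * R) * ((e \<xi>)^2)^2"
      by (rule pointwise_ineq) (use F R YM x in auto)
    finally show "G1 \<xi> - 4 * (3 * (e \<xi>)^2 * e' \<xi> * e' \<xi> + (e \<xi>)^3 * e'' \<xi>)
        + 4 * (3 * (e \<xi>)^2 * e' \<xi> * Q \<xi> + (e \<xi>)^3 * Q' \<xi>) \<le> (3 * F^2 + 4 * R) * ((e \<xi>)^2)^2" .
  qed
  then show ?thesis using D by simp
qed

lemma cont_swap:
  assumes "continuous_on (A \<times> B) (\<lambda>(x,t). u x t)"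
  shows "continuous_on (B \<times> A) (\<lambda>(t,x). u x t)"
proof -
  have "continuous_on (B \<times> A) ((\<lambda>(x,t). u x t) \<circ> (\<lambda>p. (snd p, fst p)))"
    by (intro continuous_on_compose continuous_intros continuous_on_subset[OF assms]) auto
  then show ?thesis by (simp add: o_def case_prod_beta)
qed

lemma cont_slice:
  assumes "continuous_on (A \<times> B) (\<lambda>(x,t). u x t)" "t \<in> B"
  shows "continuous_on A (\<lambda>x. u x t)"
proof -
  have "continuous_on A ((\<lambda>(x,t). u x t) \<circ> (\<lambda>x. (x, t)))"
    by (intro continuous_on_compose continuous_intros continuous_on_subset[OF assms(1)]) (use assms(2) in auto)
  then show ?thesis by (simp add: o_def)
qed

lemma energy:
  fixes y \<eta> yx et ex exx :: "real \<Rightarrow> real \<Rightarrow> real" and f' f'' r' :: "real \<Rightarrow> real"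
  assumes ycont: "continuous_on ({0..1} \<times> {0..<T}) (\<lambda>(x,t). y x t)"
    and yxc: "continuous_on ({0..1} \<times> {0<..<T}) (\<lambda>(x,t). yx x t)"
    and yder: "\<forall>x\<in>{0..1}. \<forall>t\<in>{0<..<T}. ((\<lambda>\<xi>. y \<xi> t) has_real_derivative yx x t) (at x within {0..1})"
    and ecnt: "continuous_on ({0..1} \<times> {0..<T}) (\<lambda>(x,t). \<eta> x t)"
    and etc: "continuous_on ({0..1} \<times> {0<..<T}) (\<lambda>(x,t). et x t)"
    and exc: "continuous_on ({0..1} \<times> {0<..<T}) (\<lambda>(x,t). ex x t)"
    and exxc: "continuous_on ({0..1} \<times> {0<..<T}) (\<lambda>(x,t). exx x t)"
    and eder: "\<forall>x\<in>{0..1}. \<forall>t\<in>{0<..<T}. ((\<lambda>s. \<eta> x s) has_real_derivative et x t) (at t) \<and>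
        ((\<lambda>\<xi>. \<eta> \<xi> t) has_real_derivative ex x t) (at x within {0..1}) \<and>
        ((\<lambda>\<xi>. ex \<xi> t) has_real_derivative exx x t) (at x within {0..1})"
    and ebd: "\<forall>t\<in>{0..<T}. \<eta> 0 t = 0 \<and> \<eta> 1 t = 0"
    and f'd: "\<forall>s. (f' has_real_derivative f'' s) (at s)"
    and f''c: "continuous_on UNIV f''" and r'c: "continuous_on UNIV r'"
    and pde: "\<forall>x\<in>{0<..<1}. \<forall>t\<in>{0<..<T}. et x t + (f'' (y x t) * yx x t * \<eta> x t + f' (y x t) * ex x t)
          = exx x t + r' (y x t) * \<eta> x t"
    and yM: "\<forall>x\<in>{0..1}. \<forall>t\<in>{0..<T}. \<bar>y x t\<bar> \<le> M"
    and F: "\<forall>s. \<bar>s\<bar> \<le> M \<longrightarrow> \<bar>f' s\<bar> \<le> F" and R: "\<forall>s. \<bar>s\<bar> \<le> M \<longrightarrow> r' s \<le> R"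
  shows "\<forall>t\<in>{0..<T}. integral {0..1} (\<lambda>x. ((\<eta> x t)^2)^2)
           \<le> integral {0..1} (\<lambda>x. ((\<eta> x 0)^2)^2) * exp ((3 * F^2 + 4 * R) * t)"
proof
  fix t0 assume t0: "t0 \<in> {0..<T}"
  define E where "E = (\<lambda>t. integral {0..1} (\<lambda>x. ((\<eta> x t)^2)^2))"
  define D where "D = (\<lambda>t. integral {0..1} (\<lambda>x. 4 * (\<eta> x t)^3 * et x t))"
  have Ec: "continuous_on {0..<T} E"
  proof -
    have "continuous_on ({0..<T} \<times> cbox 0 1) (\<lambda>(t,x). ((\<eta> x t)^2)^2)"
      using continuous_on_power[OF continuous_on_power[OF cont_swap[OF ecnt]], of 2 2]
      by (simp add: case_prod_beta cbox_interval)
    from integral_continuous_on_param[OF this] show ?thesis by (simp add: E_def cbox_interval)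
  qed
  have Ed: "(E has_real_derivative D t) (at t)" if t: "t \<in> {0<..<T}" for t
  proof -
    define a where "a = t / 2"
    define b where "b = (t + T) / 2"
    have ab: "0 < a" "a < t" "t < b" "b < T" using t by (auto simp: a_def b_def)
    have sub: "{a..b} \<subseteq> {0<..<T}" using ab by auto
    have "((\<lambda>s. integral (cbox 0 1) (\<lambda>x. ((\<eta> x s)^2)^2)) has_field_derivative
          integral (cbox 0 1) (\<lambda>x. 4 * (\<eta> x t)^3 * et x t)) (at t within {a..b})"
    proof (rule leibniz_rule_field_derivative)
      fix s x assume s: "s \<in> {a..b}" and x: "x \<in> cbox (0::real) 1"
      have "((\<lambda>s. \<eta> x s) has_real_derivative et x s) (at s)"
        using eder s x sub by (auto simp: cbox_interval)
      from DERIV_power[OF DERIV_power[OF this, of 2], of 2]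
      have "((\<lambda>s. ((\<eta> x s)^2)^2) has_real_derivative 4 * (\<eta> x s)^3 * et x s) (at s)"
        by (simp add: power2_eq_square power3_eq_cube algebra_simps)
      then show "((\<lambda>s. ((\<eta> x s)^2)^2) has_real_derivative 4 * (\<eta> x s)^3 * et x s) (at s within {a..b})"
        by (rule has_field_derivative_at_within)
    next
      fix s assume s: "s \<in> {a..b}"
      have "continuous_on {0..1} (\<lambda>x. \<eta> x s)" by (rule cont_slice[OF ecnt]) (use s sub in auto)
      then show "(\<lambda>x. ((\<eta> x s)^2)^2) integrable_on cbox 0 1"
        by (simp add: cbox_interval integrable_continuous_interval continuous_intros)
    next
      have c1: "continuous_on ({a..b} \<times> {0..1}) (\<lambda>(s,x). \<eta> x s)"
        by (rule continuous_on_subset[OF cont_swap[OF ecnt]]) (use sub in auto)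
      have c2: "continuous_on ({a..b} \<times> {0..1}) (\<lambda>(s,x). et x s)"
        by (rule continuous_on_subset[OF cont_swap[OF etc]]) (use sub in auto)
      show "continuous_on ({a..b} \<times> cbox 0 1) (\<lambda>(s,x). 4 * (\<eta> x s)^3 * et x s)"
        using continuous_on_mult[OF continuous_on_mult[OF continuous_on_const continuous_on_power[OF c1]] c2, of 4 3]
        by (simp add: case_prod_beta cbox_interval)
    qed (use ab in auto)
    moreover have "at t within {a..b} = at t" using ab by (intro at_within_Icc_at) auto
    ultimately show ?thesis by (simp add: E_def D_def cbox_interval)
  qed
  have DE: "D t \<le> (3 * F^2 + 4 * R) * E t" if t: "t \<in> {0<..<T}" for t
    unfolding D_def E_def
  proof (rule energy_step[where e'="\<lambda>\<xi>. ex \<xi> t" and e''="\<lambda>\<xi>. exx \<xi> t" and Y="\<lambda>\<xi>. y \<xi> t"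
        and Y'="\<lambda>\<xi>. yx \<xi> t" and f''=f'' and M=M, OF _ _ _ _ _ _ _ _ _ _ f'd f''c r'c])
    show "continuous_on {0..1} (\<lambda>\<xi>. \<eta> \<xi> t)" by (rule cont_slice[OF ecnt]) (use t in auto)
    show "continuous_on {0..1} (\<lambda>\<xi>. ex \<xi> t)" by (rule cont_slice[OF exc]) (use t in auto)
    show "continuous_on {0..1} (\<lambda>\<xi>. exx \<xi> t)" by (rule cont_slice[OF exxc]) (use t in auto)
    show "continuous_on {0..1} (\<lambda>\<xi>. y \<xi> t)" by (rule cont_slice[OF ycont]) (use t in auto)
    show "continuous_on {0..1} (\<lambda>\<xi>. yx \<xi> t)" by (rule cont_slice[OF yxc]) (use t in auto)
  qed (use eder yder ebd pde yM F R t in auto)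
  show "E t0 \<le> E 0 * exp ((3 * F^2 + 4 * R) * t0)"
    by (rule gronwall_simple[OF Ec Ed DE t0])
qed

lemma bound_on_interval:
  fixes g :: "real \<Rightarrow> real"
  assumes "continuous_on UNIV g"
  obtains F where "F \<ge> 0" "\<forall>s. \<bar>s\<bar> \<le> M \<longrightarrow> \<bar>g s\<bar> \<le> F"
proof -
  have "compact (g ` {-M..M})"
    by (intro compact_continuous_image continuous_on_subset[OF assms]) auto
  then obtain F where F: "\<forall>z\<in>g ` {-M..M}. norm z \<le> F"
    using compact_imp_bounded bounded_iff by metis
  show ?thesis
  proof (rule that[of "\<bar>F\<bar>"])
    show "\<forall>s. \<bar>s\<bar> \<le> M \<longrightarrow> \<bar>g s\<bar> \<le> \<bar>F\<bar>"
    proof (intro allI impI)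
      fix s assume "\<bar>s\<bar> \<le> M"
      then have "s \<in> {-M..M}" by (auto simp: abs_le_iff)
      then have "norm (g s) \<le> F" using F by blast
      then show "\<bar>g s\<bar> \<le> \<bar>F\<bar>" by simp
    qed
  qed simp
qed

theorem lemma2:
  fixes f r :: "real \<Rightarrow> real"
  assumes "C2 f" and "C2 r"
    and "(\<integral>\<^sup>+ s. ennreal (indicator {..0} s / (\<bar>r s\<bar> + 1)) \<partial>lborel) = \<infinity>"
    and "(\<integral>\<^sup>+ s. ennreal (indicator {0..} s / (\<bar>r s\<bar> + 1)) \<partial>lborel) = \<infinity>"
  shows "\<forall>A T. A \<ge> 0 \<longrightarrow> T > 0 \<longrightarrow>
    (\<exists>\<alpha>\<ge>0. \<forall>y \<eta> v.
       solves_y f r T y \<longrightarrow> (\<forall>x\<in>{0..1}. \<bar>y x 0\<bar> \<le> A) \<longrightarrow>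
       solves_lin f r T y \<eta> \<longrightarrow> H10 v \<longrightarrow> (\<forall>x\<in>{0..1}. \<eta> x 0 = v x) \<longrightarrow>
       (\<forall>t\<in>{0..<T}. L2norm (\<lambda>x. (\<eta> x t)^2) \<le> L2norm (\<lambda>x. (v x)^2) * exp (\<alpha> * t)))"
proof (intro allI impI)
  fix A T :: real assume A: "A \<ge> 0" and T: "T > 0"
  obtain f' f'' where f': "\<And>x. (f has_real_derivative f' x) (at x)"
    "\<And>x. (f' has_real_derivative f'' x) (at x)" "continuous_on UNIV f''"
    "continuous_on UNIV f'" "deriv f = f'"
    using C2_facts[OF assms(1)] by metis
  obtain r' r'' where r': "\<And>x. (r' has_real_derivative r'' x) (at x)"
    "continuous_on UNIV r'" "deriv r = r'"
    using C2_facts[OF assms(2)] by metis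
  obtain M where M: "\<forall>y. solves_y f r T y \<longrightarrow> (\<forall>x\<in>{0..1}. \<bar>y x 0\<bar> \<le> A) \<longrightarrow>
           (\<forall>x\<in>{0..1}. \<forall>t\<in>{0..<T}. \<bar>y x t\<bar> \<le> M)"
    using y_bound[OF assms A] by blast
  obtain F where F: "F \<ge> 0" "\<forall>s. \<bar>s\<bar> \<le> M \<longrightarrow> \<bar>f' s\<bar> \<le> F"
    using bound_on_interval[OF f'(4)] by blast
  obtain R where R: "R \<ge> 0" "\<forall>s. \<bar>s\<bar> \<le> M \<longrightarrow> \<bar>r' s\<bar> \<le> R"
    using bound_on_interval[OF r'(2)] by blast
  have R': "\<forall>s. \<bar>s\<bar> \<le> M \<longrightarrow> r' s \<le> R" using R by (auto simp: abs_le_iff)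
  define \<alpha> where "\<alpha> = (3 * F^2 + 4 * R) / 2"
  show "\<exists>\<alpha>\<ge>0. \<forall>y \<eta> v.
       solves_y f r T y \<longrightarrow> (\<forall>x\<in>{0..1}. \<bar>y x 0\<bar> \<le> A) \<longrightarrow>
       solves_lin f r T y \<eta> \<longrightarrow> H10 v \<longrightarrow> (\<forall>x\<in>{0..1}. \<eta> x 0 = v x) \<longrightarrow>
       (\<forall>t\<in>{0..<T}. L2norm (\<lambda>x. (\<eta> x t)^2) \<le> L2norm (\<lambda>x. (v x)^2) * exp (\<alpha> * t))"
  proof (intro exI[of _ \<alpha>] conjI allI impI ballI)
    show "\<alpha> \<ge> 0" using R by (simp add: \<alpha>_def)
    fix y \<eta> v t
    assume sy: "solves_y f r T y" and iy: "\<forall>x\<in>{0..1}. \<bar>y x 0\<bar> \<le> A"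
      and sl: "solves_lin f r T y \<eta>" and "H10 v" and ev: "\<forall>x\<in>{0..1}. \<eta> x 0 = v x"
      and t: "t \<in> {0..<T}"
    have yM: "\<forall>x\<in>{0..1}. \<forall>t\<in>{0..<T}. \<bar>y x t\<bar> \<le> M" using M sy iy by blast
    obtain yt yx yxx where ycont: "continuous_on ({0..1} \<times> {0..<T}) (\<lambda>(x,t). y x t)"
      and yxc: "continuous_on ({0..1} \<times> {0<..<T}) (\<lambda>(x,t). yx x t)"
      and yder0: "\<forall>x\<in>{0..1}. \<forall>t\<in>{0<..<T}. ((\<lambda>s. y x s) has_real_derivative yt x t) (at t) \<and>
        ((\<lambda>\<xi>. y \<xi> t) has_real_derivative yx x t) (at x within {0..1}) \<and>
        ((\<lambda>\<xi>. yx \<xi> t) has_real_derivative yxx x t) (at x within {0..1})"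
      using sy unfolding solves_y_def classical_reg_def by blast
    have yder: "\<forall>x\<in>{0..1}. \<forall>t\<in>{0<..<T}. ((\<lambda>\<xi>. y \<xi> t) has_real_derivative yx x t) (at x within {0..1})"
      using yder0 by blast
    obtain et ex exx where ecnt: "continuous_on ({0..1} \<times> {0..<T}) (\<lambda>(x,t). \<eta> x t)"
      and etc: "continuous_on ({0..1} \<times> {0<..<T}) (\<lambda>(x,t). et x t)"
      and exc: "continuous_on ({0..1} \<times> {0<..<T}) (\<lambda>(x,t). ex x t)"
      and exxc: "continuous_on ({0..1} \<times> {0<..<T}) (\<lambda>(x,t). exx x t)"
      and eder: "\<forall>x\<in>{0..1}. \<forall>t\<in>{0<..<T}. ((\<lambda>s. \<eta> x s) has_real_derivative et x t) (at t) \<and>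
        ((\<lambda>\<xi>. \<eta> \<xi> t) has_real_derivative ex x t) (at x within {0..1}) \<and>
        ((\<lambda>\<xi>. ex \<xi> t) has_real_derivative exx x t) (at x within {0..1})"
      and ebd: "\<forall>t\<in>{0..<T}. \<eta> 0 t = 0 \<and> \<eta> 1 t = 0"
      and eq: "\<forall>x\<in>{0<..<1}. \<forall>t\<in>{0<..<T}.
        deriv (\<lambda>s. \<eta> x s) t + deriv (\<lambda>\<xi>. deriv f (y \<xi> t) * \<eta> \<xi> t) x
          = deriv (deriv (\<lambda>\<xi>. \<eta> \<xi> t)) x + deriv r (y x t) * \<eta> x t"
      using sl unfolding solves_lin_def classical_reg_def by blast
    have pde: "\<forall>x\<in>{0<..<1}. \<forall>t\<in>{0<..<T}. et x t + (f'' (y x t) * yx x t * \<eta> x t + f' (y x t) * ex x t)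
          = exx x t + r' (y x t) * \<eta> x t"
    proof (intro ballI)
      fix x t assume x: "x \<in> {0<..<1::real}" and t: "t \<in> {0<..<T}"
      have d1: "deriv (\<lambda>s. \<eta> x s) t = et x t" using eder x t by (intro DERIV_imp_deriv) auto
      have dy: "((\<lambda>\<xi>. y \<xi> t) has_real_derivative yx x t) (at x)"
        using yder x t by (intro within01_at) auto
      have de: "((\<lambda>\<xi>. \<eta> \<xi> t) has_real_derivative ex x t) (at x)"
        using eder x t by (intro within01_at) auto
      have "((\<lambda>\<xi>. f' (y \<xi> t) * \<eta> \<xi> t) has_real_derivative
             f'' (y x t) * yx x t * \<eta> x t + f' (y x t) * ex x t) (at x)"
        using DERIV_mult[OF DERIV_chain2[OF f'(2) dy] de] by (simp add: algebra_simps)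
      then have d2: "deriv (\<lambda>\<xi>. deriv f (y \<xi> t) * \<eta> \<xi> t) x = f'' (y x t) * yx x t * \<eta> x t + f' (y x t) * ex x t"
        by (simp add: f'(5) DERIV_imp_deriv)
      have d3: "deriv (deriv (\<lambda>\<xi>. \<eta> \<xi> t)) x = exx x t"
        by (rule interior_deriv2(2)[where w'="\<lambda>\<xi>. ex \<xi> t"]) (use eder x t in auto)
      from eq x t have "deriv (\<lambda>s. \<eta> x s) t + deriv (\<lambda>\<xi>. deriv f (y \<xi> t) * \<eta> \<xi> t) x
          = deriv (deriv (\<lambda>\<xi>. \<eta> \<xi> t)) x + deriv r (y x t) * \<eta> x t" by blast
      then show "et x t + (f'' (y x t) * yx x t * \<eta> x t + f' (y x t) * ex x t) = exx x t + r' (y x t) * \<eta> x t"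
        using d1 d2 d3 r'(3) by simp
    qed
    have en: "\<forall>t\<in>{0..<T}. integral {0..1} (\<lambda>x. ((\<eta> x t)^2)^2)
           \<le> integral {0..1} (\<lambda>x. ((\<eta> x 0)^2)^2) * exp ((3 * F^2 + 4 * R) * t)"
      by (rule energy[OF ycont yxc yder ecnt etc exc exxc eder ebd _ f'(3) r'(2) pde yM F(2) R'])
         (use f'(2) in auto)
    have E0: "integral {0..1} (\<lambda>x. ((\<eta> x 0)^2)^2) = integral {0..1} (\<lambda>x. ((v x)^2)^2)"
      using ev by (intro integral_cong) auto
    have le: "integral {0..1} (\<lambda>x. ((\<eta> x t)^2)^2) \<le> integral {0..1} (\<lambda>x. ((v x)^2)^2) * exp (\<alpha> * t) ^ 2"
      using en t E0 by (simp add: \<alpha>_def exp_double[symmetric] mult.commute)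
    have "L2norm (\<lambda>x. (\<eta> x t)^2) \<le> sqrt (integral {0..1} (\<lambda>x. ((v x)^2)^2) * exp (\<alpha> * t) ^ 2)"
      unfolding L2norm_def using le by simp
    also have "\<dots> = L2norm (\<lambda>x. (v x)^2) * exp (\<alpha> * t)"
      unfolding L2norm_def by (simp add: real_sqrt_mult)
    finally show "L2norm (\<lambda>x. (\<eta> x t)^2) \<le> L2norm (\<lambda>x. (v x)^2) * exp (\<alpha> * t)" .
  qed
qed


end
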